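(* Let $\mathcal{F}=\{f_i\}_{i=1}^N$ be a frame for $\mathbb{R}^n$. If $\mathcal{F}$ has the exact PR-redundancy property, then the matrices $\{f_if_i^{T}\}_{i=1}^N$ are linearly independent in the space of real symmetric $n\times n$ matrices (and hence $N\le n(n+1)/2$). The converse does not hold in general: there exist $n$ and a frame $\mathcal{F}=\{f_i\}_{i=1}^N$ for $\mathbb{R}^n$ with $\{f_if_i^T\}_{i=1}^N$ linearly independent which does not have the exact PR-redundancy property.
   Context: A frame for $\mathbb{R}^n$ is a finite spanning sequence. Let $\mathcal{S}_2$ be the set of real symmetric $n\times n$ matrices of rank at most $2$. For $\Lambda\subseteq\{1,\dots,N\}$ let $\mathcal{F}_\Lambda=\{f_i\}_{i\in\Lambda}$ and $\Theta_{L(\mathcal{F}_\Lambda)}(A)=(f_i^TAf_i)_{i\in\Lambda}$ for symmetric $A$. $\mathcal{F}$ has the exact PR-redundancy property if for every proper subset $\Lambda\subsetneq\{1,\dots,N\}$, $\ker(\Theta_{L(\mathcal{F}_\Lambda)})\cap\mathcal{S}_2\neq\ker(\Theta_{L(\mathcal{F})})\cap\mathcal{S}_2$. *)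

theory Defs
  imports "Jordan_Normal_Form.DL_Rank"
begin

text \<open>A frame with N elements is a map \<open>f :: nat \<Rightarrow> real vec\<close>
  indexed by \<open>{..<N}\<close> (the paper's index set {1..N}, shifted by one).\<close>

definition is_frame :: "nat \<Rightarrow> nat \<Rightarrow> (nat \<Rightarrow> real vec) \<Rightarrow> bool" where
  "is_frame n N f \<longleftrightarrow> (\<forall>i<N. f i \<in> carrier_vec n) \<and>
     LinearCombinations.module.span class_ring (module_vec TYPE(real) n) (f ` {..<N}) = carrier_vec n"

definition S2 :: "nat \<Rightarrow> real mat set" where
  "S2 n = {A. A \<in> carrier_mat n n \<and> A\<^sup>T = A \<and> vec_space.rank n A \<le> 2}"

definition ker_S2 :: "nat \<Rightarrow> (nat \<Rightarrow> real vec) \<Rightarrow> nat set \<Rightarrow> real mat set" where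
  "ker_S2 n f \<Lambda> = {A \<in> S2 n. \<forall>i\<in>\<Lambda>. f i \<bullet> (A *\<^sub>v f i) = 0}"

definition exact_PR_redundancy :: "nat \<Rightarrow> nat \<Rightarrow> (nat \<Rightarrow> real vec) \<Rightarrow> bool" where
  "exact_PR_redundancy n N f \<longleftrightarrow>
     (\<forall>\<Lambda>. \<Lambda> \<subset> {..<N} \<longrightarrow> ker_S2 n f \<Lambda> \<noteq> ker_S2 n f {..<N})"

definition outer :: "nat \<Rightarrow> real vec \<Rightarrow> real mat" where
  "outer n v = mat n n (\<lambda>(j, k). v $ j * v $ k)"

text \<open>Linear independence of the family \<open>(f_i f_i^T)_{i<N}\<close> (as a family, in the space of
  real n x n matrices, equivalently in the subspace of symmetric ones).\<close>
definition outer_lin_indep :: "nat \<Rightarrow> nat \<Rightarrow> (nat \<Rightarrow> real vec) \<Rightarrow> bool" where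
  "outer_lin_indep n N f \<longleftrightarrow>
     (\<forall>c :: nat \<Rightarrow> real.
        mat n n (\<lambda>(j, k). \<Sum>i<N. c i * (outer n (f i)) $$ (j, k)) = 0\<^sub>m n n
        \<longrightarrow> (\<forall>i<N. c i = 0))"

end

theory Submission
  imports Defs
begin


lemma quad_outer:
  fixes A :: "real mat" and v :: "real vec"
  assumes A: "A \<in> carrier_mat n n" and v: "v \<in> carrier_vec n"
  shows "v \<bullet> (A *\<^sub>v v) = (\<Sum>a<n. \<Sum>b<n. A $$ (a,b) * outer n v $$ (a,b))"
proof -
  have "v \<bullet> (A *\<^sub>v v) = (\<Sum>a<n. v $ a * (\<Sum>b<n. A $$ (a,b) * v $ b))"
    using A v by (auto simp: scalar_prod_def mult_mat_vec_def atLeast0LessThan intro!: sum.cong)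
  also have "\<dots> = (\<Sum>a<n. \<Sum>b<n. A $$ (a,b) * outer n v $$ (a,b))"
    by (auto simp: outer_def sum_distrib_left intro!: sum.cong)
  finally show ?thesis .
qed

lemma part1:
  assumes fr: "is_frame n N f" and ex: "exact_PR_redundancy n N f"
  shows "outer_lin_indep n N f"
  unfolding outer_lin_indep_def
proof (rule allI, rule impI)
  fix c :: "nat \<Rightarrow> real"
  assume M0: "mat n n (\<lambda>(j, k). \<Sum>i<N. c i * (outer n (f i)) $$ (j, k)) = 0\<^sub>m n n"
  have ent: "(\<Sum>i<N. c i * (outer n (f i)) $$ (a, b)) = 0" if "a < n" "b < n" for a b
  proof -
    have "mat n n (\<lambda>(j, k). \<Sum>i<N. c i * (outer n (f i)) $$ (j, k)) $$ (a,b) = 0\<^sub>m n n $$ (a,b)"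
      using M0 by simp
    then show ?thesis using that by simp
  qed
  have car: "f i \<in> carrier_vec n" if "i < N" for i using fr that unfolding is_frame_def by auto
  have key: "(\<Sum>i<N. c i * (f i \<bullet> (A *\<^sub>v f i))) = 0" if A: "A \<in> carrier_mat n n" for A
  proof -
    have "(\<Sum>i<N. c i * (f i \<bullet> (A *\<^sub>v f i))) =
          (\<Sum>i<N. c i * (\<Sum>a<n. \<Sum>b<n. A $$ (a,b) * outer n (f i) $$ (a,b)))"
      using quad_outer[OF A car] by simp
    also have "\<dots> = (\<Sum>a<n. \<Sum>b<n. A $$ (a,b) * (\<Sum>i<N. c i * outer n (f i) $$ (a,b)))"
      by (simp add: sum_distrib_left sum_distrib_right mult_ac sum.swap[of _ "{..<N}"])
    also have "\<dots> = 0" using ent by simp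
    finally show ?thesis .
  qed
  show "\<forall>i<N. c i = 0"
  proof (rule ccontr)
    assume "\<not> (\<forall>i<N. c i = 0)"
    then obtain j where j: "j < N" "c j \<noteq> 0" by auto
    let ?L = "{..<N} - {j}"
    have sub: "?L \<subset> {..<N}" using j by auto
    have "ker_S2 n f ?L = ker_S2 n f {..<N}"
    proof (rule equalityI)
      show "ker_S2 n f ?L \<subseteq> ker_S2 n f {..<N}"
      proof
        fix A assume A: "A \<in> ker_S2 n f ?L"
        then have Ac: "A \<in> carrier_mat n n" and As: "A \<in> S2 n" and Az: "\<forall>i\<in>?L. f i \<bullet> (A *\<^sub>v f i) = 0"
          unfolding ker_S2_def S2_def by auto
        have "(\<Sum>i<N. c i * (f i \<bullet> (A *\<^sub>v f i))) = c j * (f j \<bullet> (A *\<^sub>v f j)) + (\<Sum>i\<in>?L. c i * (f i \<bullet> (A *\<^sub>v f i)))"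
          using j by (subst sum.remove[of _ j]) auto
        also have "(\<Sum>i\<in>?L. c i * (f i \<bullet> (A *\<^sub>v f i))) = 0" using Az by simp
        finally have "c j * (f j \<bullet> (A *\<^sub>v f j)) = 0" using key[OF Ac] by simp
        then have "f j \<bullet> (A *\<^sub>v f j) = 0" using j by simp
        then show "A \<in> ker_S2 n f {..<N}" using A Az j unfolding ker_S2_def by auto
      qed
      show "ker_S2 n f {..<N} \<subseteq> ker_S2 n f ?L" unfolding ker_S2_def by auto
    qed
    then show False using ex sub unfolding exact_PR_redundancy_def by blast
  qed
qed

lemma card_tri: "2 * card {(j::nat,k). j \<le> k \<and> k < n} = n * (n+1)"
proof (induction n)
  case 0 then show ?case by simp
next
  case (Suc n)
  have e: "{(j::nat,k). j \<le> k \<and> k < Suc n} = {(j,k). j \<le> k \<and> k < n} \<union> (\<lambda>j. (j,n)) ` {..n}"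
    by auto
  have f: "finite {(j::nat,k). j \<le> k \<and> k < n}"
    by (rule finite_subset[of _ "{..<n} \<times> {..<n}"]) auto
  have "card ({(j::nat,k). j \<le> k \<and> k < n} \<union> (\<lambda>j. (j,n)) ` {..n}) =
        card {(j::nat,k). j \<le> k \<and> k < n} + card ((\<lambda>j. (j,n)) ` {..n})"
    by (rule card_Un_disjoint) (use f in auto)
  moreover have "card ((\<lambda>j. (j,n)) ` {..n}) = Suc n"
    by (subst card_image) (auto simp: inj_on_def)
  ultimately show ?case using Suc e by (simp add: algebra_simps)
qed

lemma part1b:
  assumes ind: "outer_lin_indep n N f"
  shows "2 * N \<le> n * (n + 1)"
proof (rule ccontr)
  define P where "P = {(j::nat,k). j \<le> k \<and> k < n}"
  define m where "m = card P"
  assume "\<not> 2 * N \<le> n * (n + 1)"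
  then have mN: "m < N" using card_tri[of n] unfolding m_def P_def by linarith
  have fP: "finite P" unfolding P_def
    by (rule finite_subset[of _ "{..<n} \<times> {..<n}"]) auto
  obtain g where g: "bij_betw g {0..<m} P" using ex_bij_betw_nat_finite[OF fP] unfolding m_def by blast
  define rf where "rf = (\<lambda>r. vec N (\<lambda>i. if r < m then outer n (f i) $$ g r else (0::real)))"
  define M where "M = mat\<^sub>r N N rf"
  have M2: "M = mat\<^sub>r N N (\<lambda>r. if r = N - 1 then 0\<^sub>v N else rf r)"
    unfolding M_def using mN by (intro eq_matI) (auto simp: rf_def)
  have "det M = 0" unfolding M2 by (rule det_row_0) (use mN in \<open>auto simp: rf_def\<close>)
  then obtain v where v: "v \<in> carrier_vec N" "v \<noteq> 0\<^sub>v N" "M *\<^sub>v v = 0\<^sub>v N"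
    using det_0_iff_vec_prod_zero_field[of M N] unfolding M_def by auto
  have eqP: "(\<Sum>i<N. v $ i * outer n (f i) $$ p) = 0" if p: "p \<in> P" for p
  proof -
    obtain r where r: "r < m" "g r = p" using g p unfolding bij_betw_def by auto
    then have "r < N" using mN by simp
    have "(M *\<^sub>v v) $ r = 0" using v \<open>r < N\<close> by simp
    moreover have "(M *\<^sub>v v) $ r = rf r \<bullet> v"
      unfolding M_def using \<open>r < N\<close> by (simp add: rf_def)
    moreover have "rf r \<bullet> v = (\<Sum>i<N. outer n (f i) $$ p * v $ i)"
      using r v unfolding rf_def by (simp add: scalar_prod_def atLeast0LessThan)
    ultimately show ?thesis by (simp add: mult.commute)
  qed
  have "mat n n (\<lambda>(j, k). \<Sum>i<N. v $ i * (outer n (f i)) $$ (j, k)) = 0\<^sub>m n n"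
  proof (rule eq_matI)
    fix a b assume ab: "a < dim_row (0\<^sub>m n n :: real mat)" "b < dim_col (0\<^sub>m n n :: real mat)"
    show "mat n n (\<lambda>(j, k). \<Sum>i<N. v $ i * (outer n (f i)) $$ (j, k)) $$ (a, b) = 0\<^sub>m n n $$ (a, b)"
    proof (cases "a \<le> b")
      case True
      then show ?thesis using ab eqP[of "(a,b)"] by (simp add: P_def)
    next
      case False
      have "(\<Sum>i<N. v $ i * (outer n (f i)) $$ (a, b)) = (\<Sum>i<N. v $ i * (outer n (f i)) $$ (b, a))"
        using ab by (intro sum.cong) (auto simp: outer_def mult.commute)
      then show ?thesis using ab False eqP[of "(b,a)"] by (simp add: P_def)
    qed
  qed auto
  then have "\<forall>i<N. v $ i = 0" using ind unfolding outer_lin_indep_def by blast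
  then have "v = 0\<^sub>v N" using v(1) by (intro eq_vecI) auto
  then show False using v(2) by simp
qed

definition Gx :: "nat \<Rightarrow> nat \<Rightarrow> real" where
  "Gx i j = (if i < 3 then (if j = i then 1 else 0) else if i = 3 then 1
     else if i = 4 then real j + 1 else if j < 2 then 1 else 0)"

definition fx :: "nat \<Rightarrow> real vec" where "fx i = vec 3 (Gx i)"

lemma sum3: "(\<Sum>i<(3::nat). g i) = g 0 + g 1 + (g 2 :: real)"
  by (simp add: eval_nat_numeral)

lemma sum5: "(\<Sum>i<(5::nat). g i) = g 0 + g 1 + g 2 + g 3 + (g 4 :: real)"
  by (simp add: eval_nat_numeral)

lemma sum6: "(\<Sum>i<(6::nat). g i) = g 0 + g 1 + g 2 + g 3 + g 4 + (g 5 :: real)"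
  by (simp add: eval_nat_numeral)

lemma fx_car: "fx i \<in> carrier_vec 3" by (simp add: fx_def)

lemma frame: "is_frame 3 6 fx"
  unfolding is_frame_def
proof (intro conjI allI impI)
  fix i :: nat show "fx i \<in> carrier_vec 3" by (rule fx_car)
next
  have sub: "set (unit_vecs 3) \<subseteq> fx ` {..<6}"
  proof
    fix u :: "real vec" assume "u \<in> set (unit_vecs 3)"
    then obtain i where i: "i < 3" "u = unit_vec 3 i" unfolding unit_vecs_def by auto
    have "u = fx i" unfolding i(2) fx_def Gx_def using i(1) by (intro eq_vecI) auto
    then show "u \<in> fx ` {..<6}" using i by auto
  qed
  have car: "fx ` {..<6} \<subseteq> carrier (module_vec TYPE(real) 3)"
    using fx_car by (auto simp: module_vec_simps)
  have "carrier_vec 3 = LinearCombinations.module.span class_ring (module_vec TYPE(real) 3) (set (unit_vecs 3))"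
    using vec_space.span_unit_vecs_is_carrier[of 3] by metis
  also have "\<dots> \<subseteq> LinearCombinations.module.span class_ring (module_vec TYPE(real) 3) (fx ` {..<6})"
    by (rule module.span_is_monotone[OF vec_module sub])
  finally have 1: "carrier_vec 3 \<subseteq> LinearCombinations.module.span class_ring (module_vec TYPE(real) 3) (fx ` {..<6})" .
  have 2: "LinearCombinations.module.span class_ring (module_vec TYPE(real) 3) (fx ` {..<6}) \<subseteq> carrier_vec 3"
    using module.span_is_subset2[OF vec_module car] by (simp add: module_vec_simps)
  show "LinearCombinations.module.span class_ring (module_vec TYPE(real) 3) (fx ` {..<6}) = carrier_vec 3"
    using 1 2 by blast
qed

lemma indep: "outer_lin_indep 3 6 fx"
  unfolding outer_lin_indep_def
proof (rule allI, rule impI)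
  fix c :: "nat \<Rightarrow> real"
  assume M0: "mat 3 3 (\<lambda>(j, k). \<Sum>i<6. c i * (outer 3 (fx i)) $$ (j, k)) = 0\<^sub>m 3 3"
  have ent: "(\<Sum>i<6. c i * (outer 3 (fx i)) $$ (a, b)) = 0" if "a < 3" "b < 3" for a b
  proof -
    have "mat 3 3 (\<lambda>(j, k). \<Sum>i<6. c i * (outer 3 (fx i)) $$ (j, k)) $$ (a,b) = 0\<^sub>m 3 3 $$ (a,b)"
      using M0 by simp
    then show ?thesis using that by simp
  qed
  have e: "\<And>a b. a < 3 \<Longrightarrow> b < 3 \<Longrightarrow> (\<Sum>i<6. c i * (Gx i a * Gx i b)) = 0"
    using ent by (simp add: outer_def fx_def)
  have e00: "c 0 + c 3 + c 4 + c 5 = 0" using e[of 0 0] by (simp add: sum6 Gx_def)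
  have e11: "c 1 + c 3 + 4 * c 4 + c 5 = 0" using e[of 1 1] by (simp add: sum6 Gx_def)
  have e22: "c 2 + c 3 + 9 * c 4 = 0" using e[of 2 2] by (simp add: sum6 Gx_def)
  have e01: "c 3 + 2 * c 4 + c 5 = 0" using e[of 0 1] by (simp add: sum6 Gx_def)
  have e02: "c 3 + 3 * c 4 = 0" using e[of 0 2] by (simp add: sum6 Gx_def)
  have e12: "c 3 + 6 * c 4 = 0" using e[of 1 2] by (simp add: sum6 Gx_def)
  have cc: "c 0 = 0 \<and> c 1 = 0 \<and> c 2 = 0 \<and> c 3 = 0 \<and> c 4 = 0 \<and> c 5 = 0"
    using e00 e11 e22 e01 e02 e12 by linarith
  show "\<forall>i<6. c i = 0"
  proof (intro allI impI)
    fix i :: nat assume "i < 6"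
    then have "i = 0 \<or> i = 1 \<or> i = 2 \<or> i = 3 \<or> i = 4 \<or> i = 5" by arith
    then show "c i = 0" using cc by (elim disjE) simp_all
  qed
qed

lemma qform: assumes A: "A \<in> carrier_mat 3 3"
  shows "fx i \<bullet> (A *\<^sub>v fx i) = (\<Sum>a<3. \<Sum>b<3. A $$ (a,b) * (Gx i a * Gx i b))"
  using quad_outer[OF A fx_car] by (simp add: outer_def fx_def)

lemma kerprop:
  assumes A: "A \<in> ker_S2 3 fx {..<5}"
  shows "fx 5 \<bullet> (A *\<^sub>v fx 5) = 0"
proof -
  have Ac: "A \<in> carrier_mat 3 3" and At: "A\<^sup>T = A" and rk: "vec_space.rank 3 A \<le> 2"
    and z: "\<And>i. i < 5 \<Longrightarrow> fx i \<bullet> (A *\<^sub>v fx i) = 0"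
    using A unfolding ker_S2_def S2_def by auto
  have sym: "A $$ (b,a) = A $$ (a,b)" if "a < 3" "b < 3" for a b
  proof -
    have "A\<^sup>T $$ (a,b) = A $$ (b,a)" using Ac that by simp
    then show ?thesis using At by simp
  qed
  define x where "x = A $$ (0,1)"
  define y where "y = A $$ (0,2)"
  define w where "w = A $$ (1,2)"
  have s10: "A $$ (1,0) = x" and s20: "A $$ (2,0) = y" and s21: "A $$ (2,1) = w"
    using sym[of 0 1] sym[of 0 2] sym[of 1 2] unfolding x_def y_def w_def by auto
  have q: "\<And>i. fx i \<bullet> (A *\<^sub>v fx i) = (\<Sum>a<3. \<Sum>b<3. A $$ (a,b) * (Gx i a * Gx i b))"
    using qform[OF Ac] by blast
  have d0: "A $$ (0,0) = 0" using z[of 0] q[of 0] by (simp add: sum3 Gx_def)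
  have d1: "A $$ (1,1) = 0" using z[of 1] q[of 1] by (simp add: sum3 Gx_def)
  have d2: "A $$ (2,2) = 0" using z[of 2] q[of 2] by (simp add: sum3 Gx_def)
  have e3: "2 * x + 2 * y + 2 * w = 0" using z[of 3] q[of 3] d0 d1 d2 s10 s20 s21
    by (simp add: sum3 Gx_def x_def y_def w_def)
  have e4: "4 * x + 6 * y + 12 * w = 0" using z[of 4] q[of 4] d0 d1 d2 s10 s20 s21
    by (simp add: sum3 Gx_def x_def y_def w_def algebra_simps)
  have xw: "x = 3 * w" and yw: "y = -4 * w" using e3 e4 by linarith+
  have "det A = 0"
  proof (rule ccontr)
    assume "det A \<noteq> 0"
    then have "vec_space.rank 3 A = 3" using vec_space.det_rank_iff[OF Ac] by blast
    then show False using rk by simp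
  qed
  then obtain v where v: "v \<in> carrier_vec 3" "v \<noteq> 0\<^sub>v 3" "A *\<^sub>v v = 0\<^sub>v 3"
    using det_0_iff_vec_prod_zero_field[OF Ac] by auto
  have row: "(A *\<^sub>v v) $ r = (\<Sum>j<3. A $$ (r,j) * v $ j)" if "r < 3" for r
  proof -
    have "(A *\<^sub>v v) $ r = row A r \<bullet> v" using Ac that by simp
    also have "\<dots> = (\<Sum>j<3. A $$ (r,j) * v $ j)"
      using Ac v(1) that by (auto simp: scalar_prod_def atLeast0LessThan intro!: sum.cong)
    finally show ?thesis .
  qed
  have r0: "x * v $ 1 + y * v $ 2 = 0" using row[of 0] v(3) d0 by (simp add: sum3 x_def y_def)
  have r1: "x * v $ 0 + w * v $ 2 = 0" using row[of 1] v(3) d1 s10 by (simp add: sum3 w_def)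
  have r2: "y * v $ 0 + w * v $ 1 = 0" using row[of 2] v(3) d2 s20 s21 by (simp add: sum3)
  have "w = 0"
  proof (rule ccontr)
    assume wn: "w \<noteq> 0"
    have a': "w * (3 * v $ 1 - 4 * v $ 2) = 0" using r0 unfolding xw yw by (simp add: algebra_simps)
    have b': "w * (3 * v $ 0 + v $ 2) = 0" using r1 unfolding xw by (simp add: algebra_simps)
    have c': "w * (-4 * v $ 0 + v $ 1) = 0" using r2 unfolding yw by (simp add: algebra_simps)
    have a: "3 * v $ 1 - 4 * v $ 2 = 0" using a' wn by simp
    have b: "3 * v $ 0 + v $ 2 = 0" using b' wn by simp
    have c: "-4 * v $ 0 + v $ 1 = 0" using c' wn by simp
    have "v $ 0 = 0" "v $ 1 = 0" "v $ 2 = 0" using a b c by linarith+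
    then have "v = 0\<^sub>v 3" using v(1) by (intro eq_vecI) (auto simp: eval_nat_numeral less_Suc_eq)
    then show False using v(2) by simp
  qed
  then have x0: "x = 0" using xw by simp
  have a01: "A $$ (0,1) = 0" using x0 unfolding x_def .
  have a10: "A $$ (1,0) = 0" using x0 s10 by simp
  show ?thesis using q[of 5] d0 d1 a01 a10 by (simp add: sum3 Gx_def)
qed

lemma notexact: "\<not> exact_PR_redundancy 3 6 fx"
proof -
  have eq: "ker_S2 3 fx {..<5} = ker_S2 3 fx {..<6}"
  proof (rule equalityI)
    show "ker_S2 3 fx {..<5} \<subseteq> ker_S2 3 fx {..<6}"
    proof
      fix A assume A: "A \<in> ker_S2 3 fx {..<5}"
      have "fx 5 \<bullet> (A *\<^sub>v fx 5) = 0" by (rule kerprop[OF A])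
      have all: "\<forall>i\<in>{..<6}. fx i \<bullet> (A *\<^sub>v fx i) = 0"
      proof
        fix i assume "i \<in> {..<6::nat}"
        then have "i < 5 \<or> i = 5" by auto
        then show "fx i \<bullet> (A *\<^sub>v fx i) = 0"
        proof
          assume "i < 5" then show ?thesis using A unfolding ker_S2_def by auto
        qed (use \<open>fx 5 \<bullet> (A *\<^sub>v fx 5) = 0\<close> in simp)
      qed
      then show "A \<in> ker_S2 3 fx {..<6}" using A unfolding ker_S2_def by blast
    qed
    show "ker_S2 3 fx {..<6} \<subseteq> ker_S2 3 fx {..<5}" unfolding ker_S2_def by auto
  qed
  have ps: "{..<5::nat} \<subset> {..<6}"
    by (simp only: lessThan_strict_subset_iff)
  show ?thesis unfolding exact_PR_redundancy_def
  proof
    assume h: "\<forall>\<Lambda>. \<Lambda> \<subset> {..<6} \<longrightarrow> ker_S2 3 fx \<Lambda> \<noteq> ker_S2 3 fx {..<6}"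
    then have "{..<5::nat} \<subset> {..<6} \<longrightarrow> ker_S2 3 fx {..<5} \<noteq> ker_S2 3 fx {..<6}" by (rule spec)
    then have "ker_S2 3 fx {..<5} \<noteq> ker_S2 3 fx {..<6}" using ps by (rule mp)
    then show False using eq by (rule notE)
  qed
qed


theorem lemma1p5:
  shows "(\<forall>(n::nat) (N::nat) (f :: nat \<Rightarrow> real vec).
            is_frame n N f \<and> exact_PR_redundancy n N f \<longrightarrow>
              outer_lin_indep n N f \<and> 2 * N \<le> n * (n + 1))
       \<and> (\<exists>(n::nat) (N::nat) (f :: nat \<Rightarrow> real vec).
            is_frame n N f \<and> outer_lin_indep n N f \<and> \<not> exact_PR_redundancy n N f)"
proof (rule conjI)
  show "\<forall>(n::nat) (N::nat) (f :: nat \<Rightarrow> real vec).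
            is_frame n N f \<and> exact_PR_redundancy n N f \<longrightarrow>
              outer_lin_indep n N f \<and> 2 * N \<le> n * (n + 1)"
  proof (intro allI impI)
    fix n N :: nat and f :: "nat \<Rightarrow> real vec"
    assume h: "is_frame n N f \<and> exact_PR_redundancy n N f"
    then have i: "outer_lin_indep n N f" using part1 by blast
    then have "2 * N \<le> n * (n + 1)" by (rule part1b)
    then show "outer_lin_indep n N f \<and> 2 * N \<le> n * (n + 1)" using i by (rule conjI[rotated])
  qed
  show "\<exists>(n::nat) (N::nat) (f :: nat \<Rightarrow> real vec).
            is_frame n N f \<and> outer_lin_indep n N f \<and> \<not> exact_PR_redundancy n N f"
    by (rule exI[of _ 3], rule exI[of _ 6], rule exI[of _ fx]) (intro conjI frame indep notexact)
qed

end
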